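(* Let $L$ be a finite unramified extension of $\mathbb Q_\ell$ with ring of integers $S$, and let $\nu$ be the valuation on $L$ normalized by $\nu(\ell)=1$. Let $T$ be a free $S$-module of finite rank $d$ and $x$ an $S$-linear endomorphism of $T$ whose reduction $\bar x$ on $T/\ell T$ is nilpotent. Let $Q(t)=\det(t-x\mid T\otimes_S L)\in S[t]$. Then the Newton polygon $\mathrm{Np}(Q)$ lies on or above the Young polygon $\mathrm{Hp}(x|T)$.
   Context: Young polygon: for a nilpotent $d\times d$ matrix (or endomorphism) $N$ over a field with Jordan block sizes $m_1\ge m_2\ge\dots\ge m_r$ (so $\sum m_j=d$), $\mathrm{Hp}(N)$ is the piecewise linear function on $[0,d]$ whose graph is the polygon with vertices $(\sum_{j=1}^i m_j,\, i)$, $0\le i\le r$; its slopes are $1/m_1\le\dots\le 1/m_r$. We write $\mathrm{Hp}(N)=(m_1,\dots,m_r)$. For $x$ an $S$-linear endomorphism of a free $S$-module $T$ inducing a nilpotent endomorphism of the $S/\ell S$-vector space $T/\ell T$, $\mathrm{Hp}(x|T)$ denotes the Young polygon of that induced endomorphism. Newton polygon: for $Q(t)=\sum_{i=0}^d Q_it^{d-i}$ monic of degree $d$ over $L$ (with $\nu(0)=+\infty$), $\mathrm{Np}(Q)$ is the largest convex function $\phi$ on $[0,d]$ with $\phi(i)\le \nu(Q_i)$ for all $0\le i\le d$ (the lower boundary of the convex hull of the points $(i,\nu(Q_i))$). "$\mathrm{Np}(Q)$ lies on or above $\mathrm{Hp}(N)$" means $\mathrm{Np}(Q)(s)\ge \mathrm{Hp}(N)(s)$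 for all $s\in[0,d]$. *)

theory Defs
  imports "HOL-Analysis.Convex" "HOL-Library.Extended_Real" "Jordan_Normal_Form.Jordan_Normal_Form"
begin

text \<open>A valuation is given on the nonzero elements as an integer-valued function;
  the value at 0 is irrelevant and is treated as +infinity everywhere below.\<close>

definition discrete_valuation :: "('a::field \<Rightarrow> int) \<Rightarrow> bool" where
  "discrete_valuation nu \<longleftrightarrow>
     (\<forall>x y. x \<noteq> 0 \<longrightarrow> y \<noteq> 0 \<longrightarrow> nu (x * y) = nu x + nu y) \<and>
     (\<forall>x y. x \<noteq> 0 \<longrightarrow> y \<noteq> 0 \<longrightarrow> x + y \<noteq> 0 \<longrightarrow> nu (x + y) \<ge> min (nu x) (nu y))"

definition val_ring :: "('a::field \<Rightarrow> int) \<Rightarrow> 'a set" where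
  "val_ring nu = {x. x = 0 \<or> nu x \<ge> 0}"

text \<open>x is congruent to y modulo l^n S (with nu(l) = 1, l^n S = {z. z = 0 or nu z >= n})\<close>
definition val_cong :: "('a::field \<Rightarrow> int) \<Rightarrow> int \<Rightarrow> 'a \<Rightarrow> 'a \<Rightarrow> bool" where
  "val_cong nu n x y \<longleftrightarrow> x - y = 0 \<or> nu (x - y) \<ge> n"

definition val_complete :: "('a::field \<Rightarrow> int) \<Rightarrow> bool" where
  "val_complete nu \<longleftrightarrow>
     (\<forall>f :: nat \<Rightarrow> 'a. (\<forall>N. \<exists>M. \<forall>m\<ge>M. \<forall>n\<ge>M. val_cong nu N (f m) (f n)) \<longrightarrow>
        (\<exists>y. \<forall>N. \<exists>M. \<forall>n\<ge>M. val_cong nu N (f n) y))"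

text \<open>L is a finite unramified extension of Q_l with valuation normalized by nu(l) = 1:
  a complete discretely valued field of characteristic 0 with finite residue field
  in which l is a uniformizer (nu l = 1).\<close>
definition unramified_l_adic_field :: "nat \<Rightarrow> ('a::field_char_0 \<Rightarrow> int) \<Rightarrow> bool" where
  "unramified_l_adic_field l nu \<longleftrightarrow>
     prime l \<and> discrete_valuation nu \<and> nu (of_nat l) = 1 \<and> val_complete nu \<and>
     finite (val_ring nu // {(x, y). x \<in> val_ring nu \<and> y \<in> val_ring nu \<and> val_cong nu 1 x y})"

definition integral_mat :: "('a::field \<Rightarrow> int) \<Rightarrow> 'a mat \<Rightarrow> bool" where
  "integral_mat nu A \<longleftrightarrow> (\<forall>i < dim_row A. \<forall>j < dim_col A. A $$ (i, j) \<in> val_ring nu)"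

definition mat_cong_l :: "('a::field \<Rightarrow> int) \<Rightarrow> 'a mat \<Rightarrow> 'a mat \<Rightarrow> bool" where
  "mat_cong_l nu A B \<longleftrightarrow> dim_row A = dim_row B \<and> dim_col A = dim_col B \<and>
     (\<forall>i < dim_row A. \<forall>j < dim_col A. val_cong nu 1 (A $$ (i, j)) (B $$ (i, j)))"

definition reduction_nilpotent :: "('a::field \<Rightarrow> int) \<Rightarrow> 'a mat \<Rightarrow> bool" where
  "reduction_nilpotent nu A \<longleftrightarrow> (\<exists>k. mat_cong_l nu (A ^\<^sub>m k) (0\<^sub>m (dim_row A) (dim_row A)))"

text \<open>ms is the list of Jordan block sizes (decreasing) of the reduction of A:
  after an integral change of basis (P invertible over S), A reduces mod l to the
  nilpotent Jordan matrix with blocks ms.  (Every invertible matrix over S/lS lifts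
  to such a P, so this is exactly the Jordan form of the reduction.)\<close>
definition reduction_jordan_type :: "('a::field \<Rightarrow> int) \<Rightarrow> 'a mat \<Rightarrow> nat list \<Rightarrow> bool" where
  "reduction_jordan_type nu A ms \<longleftrightarrow>
     sorted_wrt (\<ge>) ms \<and> (\<forall>m \<in> set ms. m > 0) \<and>
     (\<exists>P Pi. P \<in> carrier_mat (dim_row A) (dim_row A) \<and> Pi \<in> carrier_mat (dim_row A) (dim_row A) \<and>
        integral_mat nu P \<and> integral_mat nu Pi \<and> P * Pi = 1\<^sub>m (dim_row A) \<and>
        mat_cong_l nu (Pi * A * P) (jordan_matrix (map (\<lambda>m. (m, 0)) ms)))"

text \<open>Young polygon Hp(m_1,...,m_r): piecewise linear, vertices (m_1+...+m_i, i).\<close>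
fun young_polygon :: "nat list \<Rightarrow> real \<Rightarrow> real" where
  "young_polygon [] s = 0"
| "young_polygon (m # ms) s =
     (if s \<le> real m then s / real m else 1 + young_polygon ms (s - real m))"

text \<open>Newton polygon of a monic Q of degree d, Q(t) = sum_i Q_i t^(d-i): the largest convex
  function phi on [0,d] with phi(i) <= nu(Q_i) (no condition where Q_i = 0, nu(0) = +infinity),
  realised as the pointwise supremum of all such functions (with values in ereal).\<close>
definition newton_polygon :: "('a::field \<Rightarrow> int) \<Rightarrow> 'a poly \<Rightarrow> real \<Rightarrow> ereal" where
  "newton_polygon nu Q s =
     (SUP phi \<in> {phi. convex_on {0..real (degree Q)} phi \<and>
                 (\<forall>i \<le> degree Q. coeff Q (degree Q - i) \<noteq> 0 \<longrightarrow>
                    phi (real i) \<le> real_of_int (nu (coeff Q (degree Q - i))))}.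
        ereal (phi s))"

end

theory Submission
  imports Defs
begin

lemma dv_mult: assumes "discrete_valuation nu" "x \<noteq> 0" "y \<noteq> 0" shows "nu (x * y) = nu x + nu y"
  using assms unfolding discrete_valuation_def by blast

lemma dv_add: assumes "discrete_valuation nu" "x \<noteq> 0" "y \<noteq> 0" "x + y \<noteq> 0"
  shows "nu (x + y) \<ge> min (nu x) (nu y)"
  using assms unfolding discrete_valuation_def by blast

lemma nu_one: assumes "discrete_valuation nu" shows "nu 1 = 0"
proof -
  have "nu (1 * 1) = nu 1 + nu 1" by (rule dv_mult[OF assms]) simp_all
  then show ?thesis by simp
qed

lemma nu_mone: assumes "discrete_valuation nu" shows "nu (-1) = 0"
proof -
  have "nu ((-1) * (-1)) = nu (-1) + nu (-1)" by (rule dv_mult[OF assms]) simp_all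
  then show ?thesis using nu_one[OF assms] by simp
qed

lemma nu_uminus: assumes "discrete_valuation nu" "x \<noteq> 0" shows "nu (-x) = nu x"
proof -
  have "nu ((-1) * x) = nu (-1) + nu x" by (rule dv_mult[OF assms(1)]) (simp_all add: assms)
  then show ?thesis using nu_mone[OF assms(1)] by simp
qed
lemma val_sum:
  assumes dv: "discrete_valuation nu" and up: "\<And>x y. P x \<Longrightarrow> x \<le> y \<Longrightarrow> P y"
    and fin: "finite S" and h: "\<forall>i\<in>S. f i = 0 \<or> P (nu (f i))"
  shows "sum f S = 0 \<or> P (nu (sum f S))"
  using fin h
proof (induction S rule: finite_induct)
  case empty then show ?case by simp
next
  case (insert a S)
  have ha: "f a = 0 \<or> P (nu (f a))" using insert by auto
  have hs: "sum f S = 0 \<or> P (nu (sum f S))" using insert by auto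
  have eq: "sum f (insert a S) = f a + sum f S" using insert by simp
  show ?case
  proof (cases "f a = 0 \<or> sum f S = 0")
    case True then show ?thesis using ha hs eq by auto
  next
    case False
    show ?thesis
    proof (cases "f a + sum f S = 0")
      case True then show ?thesis using eq by simp
    next
      case F2: False
      have mm: "nu (f a + sum f S) \<ge> min (nu (f a)) (nu (sum f S))"
        using dv_add[OF dv] False F2 by blast
      have pm: "P (min (nu (f a)) (nu (sum f S)))" using ha hs False
        by (simp add: min_def)
      have "P (nu (f a + sum f S))" by (rule up[OF pm mm])
      then show ?thesis using eq by simp
    qed
  qed
qed

definition wbound :: "('a::field \<Rightarrow> int) \<Rightarrow> int \<Rightarrow> 'a poly \<Rightarrow> int \<Rightarrow> bool" where
  "wbound nu m p N \<longleftrightarrow> (\<forall>j. coeff p j \<noteq> 0 \<longrightarrow> N \<le> m * nu (coeff p j) + int j)"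

lemma wbound_mono: "wbound nu m p N \<Longrightarrow> N' \<le> N \<Longrightarrow> wbound nu m p N'"
  unfolding wbound_def by force

lemma wbound_mult:
  assumes dv: "discrete_valuation nu" and m: "m \<ge> 0"
    and p: "wbound nu m p N" and q: "wbound nu m q M"
  shows "wbound nu m (p * q) (N + M)"
  unfolding wbound_def
proof (intro allI impI)
  fix n assume nz: "coeff (p * q) n \<noteq> 0"
  let ?P = "\<lambda>x. N + M \<le> m * x + int n"
  have up: "\<And>x y. ?P x \<Longrightarrow> x \<le> y \<Longrightarrow> ?P y"
  proof -
    fix x y assume "?P x" "x \<le> y"
    then have "m * x \<le> m * y" using m by (simp add: mult_left_mono)
    then show "?P y" using \<open>?P x\<close> by linarith
  qed
  have "\<forall>i\<in>{..n}. coeff p i * coeff q (n - i) = 0 \<or> ?P (nu (coeff p i * coeff q (n - i)))"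
  proof
    fix i assume i: "i \<in> {..n}"
    show "coeff p i * coeff q (n - i) = 0 \<or> ?P (nu (coeff p i * coeff q (n - i)))"
    proof (cases "coeff p i = 0 \<or> coeff q (n - i) = 0")
      case True then show ?thesis by auto
    next
      case False
      have e: "nu (coeff p i * coeff q (n - i)) = nu (coeff p i) + nu (coeff q (n - i))"
        using dv_mult[OF dv] False by blast
      have "N \<le> m * nu (coeff p i) + int i" using p False unfolding wbound_def by blast
      moreover have "M \<le> m * nu (coeff q (n - i)) + int (n - i)" using q False unfolding wbound_def by blast
      ultimately show ?thesis using i e by (auto simp: distrib_left)
    qed
  qed
  from val_sum[OF dv up _ this] nz show "N + M \<le> m * nu (coeff (p * q) n) + int n"
    by (simp add: coeff_mult)
qed

lemma wbound_sum:
  assumes dv: "discrete_valuation nu" and m: "m \<ge> 0" and fin: "finite S"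
    and h: "\<forall>x\<in>S. wbound nu m (f x) N"
  shows "wbound nu m (sum f S) N"
  unfolding wbound_def
proof (intro allI impI)
  fix n assume nz: "coeff (sum f S) n \<noteq> 0"
  let ?P = "\<lambda>x. N \<le> m * x + int n"
  have up: "\<And>x y. ?P x \<Longrightarrow> x \<le> y \<Longrightarrow> ?P y"
  proof -
    fix x y assume "?P x" "x \<le> y"
    then have "m * x \<le> m * y" using m by (simp add: mult_left_mono)
    then show "?P y" using \<open>?P x\<close> by linarith
  qed
  have "\<forall>x\<in>S. coeff (f x) n = 0 \<or> ?P (nu (coeff (f x) n))"
    using h unfolding wbound_def by blast
  from val_sum[OF dv up fin this] nz show "N \<le> m * nu (coeff (sum f S) n) + int n"
    by (simp add: coeff_sum)
qed

lemma wbound_one: assumes "discrete_valuation nu" shows "wbound nu m 1 0"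
  unfolding wbound_def using nu_one[OF assms] by (auto simp: coeff_1)

lemma wbound_prod:
  assumes dv: "discrete_valuation nu" and m: "m \<ge> 0" and fin: "finite S"
    and h: "\<forall>x\<in>S. wbound nu m (f x) (w x)"
  shows "wbound nu m (prod f S) (sum w S)"
  using fin h
proof (induction S rule: finite_induct)
  case empty then show ?case using wbound_one[OF dv] by simp
next
  case (insert a S)
  then show ?case using wbound_mult[OF dv m] by simp
qed

lemma wbound_const:
  assumes dv: "discrete_valuation nu" and h: "c = 0 \<or> nu c \<ge> e" and m: "m \<ge> 0"
  shows "wbound nu m [:c:] (m * e)"
  unfolding wbound_def
proof (intro allI impI)
  fix j assume nz: "coeff [:c:] j \<noteq> 0"
  then have j: "j = 0" by (cases j) auto
  with nz have "c \<noteq> 0" by simp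
  with h have "e \<le> nu c" by simp
  then have "m * e \<le> m * nu c" using m by (simp add: mult_left_mono)
  then show "m * e \<le> m * nu (coeff [:c:] j) + int j" using j by simp
qed

lemma wbound_signof:
  assumes dv: "discrete_valuation nu" and m: "m \<ge> 0"
  shows "wbound nu m (signof p :: 'a::field poly) 0"
proof -
  have "(signof p :: 'a poly) = [: of_int (sign p) :]"
    by (simp add: of_int_poly)
  moreover have "(of_int (sign p) :: 'a) = 0 \<or> nu (of_int (sign p)) \<ge> 0"
    using nu_one[OF dv] nu_mone[OF dv] by (auto simp: sign_def)
  ultimately show ?thesis using wbound_const[OF dv _ m, of _ 0] by simp
qed


fun cw :: "nat \<Rightarrow> nat list \<Rightarrow> nat \<Rightarrow> int" where
  "cw m [] j = 0"
| "cw m (n # ns) j = (if j < n then (if j + 1 < m \<or> j + 1 = n then 1 else 0) else cw m ns (j - n))"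

fun fw :: "nat \<Rightarrow> nat list \<Rightarrow> nat \<Rightarrow> int" where
  "fw m [] j = 0"
| "fw m (n # ns) j = (if j < n then - int (min j (m - 1)) else fw m ns (j - n))"

lemma cw_bounds: "0 \<le> cw m ns j \<and> cw m ns j \<le> 1"
  by (induction ns arbitrary: j) auto

lemma fw_bounds: "- int (m - 1) \<le> fw m ns j \<and> fw m ns j \<le> 0"
  by (induction ns arbitrary: j) auto

lemma block_sum: assumes m: "m > 0" shows "(\<Sum>j<n. (if j + 1 < m \<or> j + 1 = n then 1 else 0 :: int)) = int (min n m)"
proof (cases "n = 0")
  case True then show ?thesis by simp
next
  case False
  have S: "{j. j < n \<and> (j + 1 < m \<or> j + 1 = n)} = {0..<min n m - 1} \<union> {n - 1}"
    using False m by auto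
  have "(\<Sum>j<n. (if j + 1 < m \<or> j + 1 = n then 1 else 0 :: int))
      = int (card {j. j < n \<and> (j + 1 < m \<or> j + 1 = n)})"
    by (simp add: sum.If_cases lessThan_def Collect_conj_eq[symmetric])
  also have "card {j. j < n \<and> (j + 1 < m \<or> j + 1 = n)} = min n m"
    unfolding S using False m by (subst card_Un_disjoint) auto
  finally show ?thesis .
qed

lemma cw_sum: assumes m: "m > 0" shows "(\<Sum>j<sum_list ns. cw m ns j) = (\<Sum>n\<leftarrow>ns. int (min n m))"
proof (induction ns)
  case Nil then show ?case by simp
next
  case (Cons n ns)
  have "(\<Sum>j<n + sum_list ns. cw m (n # ns) j)
     = (\<Sum>j<n. cw m (n # ns) j) + (\<Sum>j\<in>{n..<n + sum_list ns}. cw m (n # ns) j)"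
    unfolding lessThan_atLeast0 by (rule sum.atLeastLessThan_concat[symmetric]) simp_all
  also have "(\<Sum>j<n. cw m (n # ns) j) = int (min n m)"
    using block_sum[OF m, of n] by simp
  also have "(\<Sum>j\<in>{n..<n + sum_list ns}. cw m (n # ns) j) = (\<Sum>j<sum_list ns. cw m ns j)"
  proof -
    have "(\<Sum>j\<in>{n..<n + sum_list ns}. cw m (n # ns) j) = (\<Sum>j\<in>{0 + n..<sum_list ns + n}. cw m (n # ns) j)"
      by (simp add: add.commute)
    also have "\<dots> = (\<Sum>j\<in>{0..<sum_list ns}. cw m (n # ns) (j + n))"
      by (rule sum.shift_bounds_nat_ivl)
    also have "\<dots> = (\<Sum>j<sum_list ns. cw m ns j)"
      by (simp add: lessThan_atLeast0)
    finally show ?thesis .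
  qed
  finally show ?case using Cons.IH by simp
qed

abbreviation JM :: "nat list \<Rightarrow> 'a::{zero,one} mat" where
  "JM ns \<equiv> jordan_matrix (map (\<lambda>n. (n, 0)) ns)"

lemma JM_dim[simp]: "dim_row (JM ns) = sum_list ns" "dim_col (JM ns) = sum_list ns"
  by (simp_all add: comp_def)

lemma JM_entry:
  assumes "i < sum_list ns" "k < sum_list ns" "(JM ns :: 'a::{zero_neq_one} mat) $$ (i, k) \<noteq> 0"
  shows "(JM ns :: 'a mat) $$ (i, k) = 1 \<and> k = Suc i \<and> cw m ns i + fw m ns k \<le> fw m ns i"
  using assms
proof (induction ns arbitrary: i k)
  case Nil then show ?case by simp
next
  case (Cons n ns)
  have JC: "(JM (n # ns) :: 'a mat) = four_block_mat (jordan_block n 0) (0\<^sub>m n (sum_list ns))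
       (0\<^sub>m (sum_list ns) n) (JM ns)"
    using jordan_matrix_Cons[of n "0::'a" "map (\<lambda>n. (n, 0)) ns"] by (simp add: comp_def)
  have idx: "(JM (n # ns) :: 'a mat) $$ (i, k) = (if i < n then if k < n then jordan_block n (0::'a) $$ (i,k) else 0
      else if k < n then 0 else (JM ns :: 'a mat) $$ (i - n, k - n))"
    unfolding JC using Cons.prems(1,2) by (simp add: comp_def)
  show ?case
  proof (cases "i < n")
    case True
    show ?thesis
    proof (cases "k < n")
      case True2: True
      have e: "(JM (n # ns) :: 'a mat) $$ (i, k) = (if i = k then 0 else if Suc i = k then 1 else 0)"
        using idx True True2 by simp
      with Cons.prems(3) have k: "k = Suc i" by (auto split: if_splits)
      have "cw m (n # ns) i + fw m (n # ns) k \<le> fw m (n # ns) i"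
        using True True2 k by auto
      then show ?thesis using e k by simp
    next
      case False
      then show ?thesis using idx True Cons.prems(3) by simp
    qed
  next
    case False
    show ?thesis
    proof (cases "k < n")
      case True then show ?thesis using idx False Cons.prems(3) by simp
    next
      case False2: False
      have e: "(JM (n # ns) :: 'a mat) $$ (i, k) = (JM ns :: 'a mat) $$ (i - n, k - n)"
        using idx False False2 by simp
      have "(JM ns :: 'a mat) $$ (i - n, k - n) = 1 \<and> k - n = Suc (i - n) \<and>
          cw m ns (i - n) + fw m ns (k - n) \<le> fw m ns (i - n)"
        using Cons.IH[of "i - n" "k - n"] Cons.prems False False2 e by auto
      then show ?thesis using e False False2 by auto
    qed
  qed
qed


lemma neg_val: "discrete_valuation nu \<Longrightarrow> b = 0 \<or> e \<le> nu b \<Longrightarrow> - b = 0 \<or> e \<le> nu (- b)"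
  using nu_uminus by fastforce

lemma charpoly_wbound:
  fixes B :: "'a::field mat"
  assumes dv: "discrete_valuation nu" and B: "B \<in> carrier_mat d d" and d: "d = sum_list ms"
    and m: "m > 0" and cong: "mat_cong_l nu B (JM ms)"
  shows "wbound nu (int m) (char_poly B) (\<Sum>j<d. cw m ms j)"
proof -
  let ?M = "char_poly_matrix B"
  let ?J = "JM ms :: 'a mat"
  have Mc: "?M \<in> carrier_mat d d" using B by simp
  have Me: "?M $$ (i,k) = (if i = k then [:0,1:] else 0) + [:- B $$ (i,k):]" if "i < d" "k < d" for i k
    using that B by (simp add: char_poly_matrix_def)
  have vc: "val_cong nu 1 (B $$ (i,k)) (?J $$ (i,k))" if "i < d" "k < d" for i k
    using cong that B unfolding mat_cong_l_def by auto
  define w where "w i k = (if i = k then 1 else if ?J $$ (i,k) = 0 then int m else 0)" for i k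
  have ent: "wbound nu (int m) (?M $$ (i,k)) (w i k)" if ik: "i < d" "k < d" for i k
  proof (cases "i = k")
    case True
    have J0: "?J $$ (i,k) = 0"
      using JM_entry[of i ms k m] ik d True by force
    have b: "B $$ (i,k) = 0 \<or> 1 \<le> nu (B $$ (i,k))" using vc[OF ik] J0 unfolding val_cong_def by simp
    have eq: "?M $$ (i,k) = [:- B $$ (i,k), 1:]" using Me[OF ik] True by simp
    show ?thesis unfolding eq w_def wbound_def
    proof (intro allI impI)
      fix j assume nz: "coeff [:- B $$ (i, k), 1:] j \<noteq> 0"
      show "(if i = k then 1 else if ?J $$ (i, k) = 0 then int m else 0)
          \<le> int m * nu (coeff [:- B $$ (i, k), 1:] j) + int j"
      proof (cases j)
        case 0
        then have "B $$ (i,k) \<noteq> 0" using nz by simp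
        then have "1 \<le> nu (- B $$ (i,k))" using b nu_uminus[OF dv] by simp
        then have a: "int m * 1 \<le> int m * nu (- B $$ (i,k))" using m by (simp add: mult_left_mono)
        have "1 \<le> int m" using m by simp
        with a have "1 \<le> int m * nu (- B $$ (i,k))" by linarith
        then show ?thesis using 0 True by simp
      next
        case (Suc j')
        then have "j' = 0" using nz by (cases j') auto
        then show ?thesis using Suc True nu_one[OF dv] by simp
      qed
    qed
  next
    case False
    have eq: "?M $$ (i,k) = [:- B $$ (i,k):]" using Me[OF ik] False by simp
    show ?thesis
    proof (cases "?J $$ (i,k) = 0")
      case True
      have b: "B $$ (i,k) = 0 \<or> 1 \<le> nu (B $$ (i,k))" using vc[OF ik] True unfolding val_cong_def by simp
      have "wbound nu (int m) [:- B $$ (i,k):] (int m * 1)"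
        by (rule wbound_const[OF dv neg_val[OF dv b]]) simp
      then show ?thesis unfolding eq w_def using False True by simp
    next
      case J1: False
      have J1': "?J $$ (i,k) = 1" using JM_entry[of i ms k m] ik d J1 by auto
      have b1: "B $$ (i,k) - 1 = 0 \<or> 1 \<le> nu (B $$ (i,k) - 1)"
        using vc[OF ik] J1' unfolding val_cong_def by simp
      have b: "B $$ (i,k) = 0 \<or> 0 \<le> nu (B $$ (i,k))"
      proof (cases "B $$ (i,k) = 1 \<or> B $$ (i,k) = 0")
        case True then show ?thesis using nu_one[OF dv] by auto
      next
        case F: False
        then have h: "B $$ (i,k) - 1 \<noteq> 0" "B $$ (i,k) - 1 + 1 \<noteq> 0" by auto
        have "min (nu (B $$ (i,k) - 1)) (nu 1) \<le> nu (B $$ (i,k) - 1 + 1)"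
          by (rule dv_add[OF dv h(1) _ h(2)]) simp
        then show ?thesis using b1 h nu_one[OF dv] by simp
      qed
      have "wbound nu (int m) [:- B $$ (i,k):] (int m * 0)"
        by (rule wbound_const[OF dv neg_val[OF dv b]]) simp
      then show ?thesis unfolding eq w_def using False J1 by simp
    qed
  qed
  have pot: "cw m ms i + fw m ms k - fw m ms i \<le> w i k" if ik: "i < d" "k < d" for i k
  proof -
    have c: "cw m ms i \<le> 1" using cw_bounds by blast
    have f: "fw m ms k \<le> 0" "- int (m - 1) \<le> fw m ms i" using fw_bounds by blast+
    show ?thesis
    proof (cases "i = k")
      case True then show ?thesis unfolding w_def using c by simp
    next
      case False
      show ?thesis
      proof (cases "?J $$ (i,k) = 0")
        case True then show ?thesis unfolding w_def using False c f m by auto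
      next
        case J1: False
        have "cw m ms i + fw m ms k \<le> fw m ms i" using JM_entry[of i ms k m] ik d J1 by auto
        then show ?thesis unfolding w_def using False J1 by simp
      qed
    qed
  qed
  have cp: "char_poly B = (\<Sum>p\<in>{p. p permutes {0..<d}}. signof p * (\<Prod>i = 0..<d. ?M $$ (i, p i)))"
    unfolding char_poly_def det_def using Mc by simp
  show ?thesis unfolding cp
  proof (rule wbound_sum[OF dv _ _ ballI])
    fix p assume "p \<in> {p. p permutes {0..<d}}"
    then have p: "p permutes {0..<d}" by simp
    have pr: "wbound nu (int m) (\<Prod>i = 0..<d. ?M $$ (i, p i)) (\<Sum>i = 0..<d. w i (p i))"
      by (rule wbound_prod[OF dv]) (use ent permutes_in_image[OF p] in auto)
    have "(\<Sum>i = 0..<d. fw m ms (p i)) = (\<Sum>i = 0..<d. fw m ms i)"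
    proof -
      have "(\<Sum>i = 0..<d. fw m ms (p i)) = sum (fw m ms) (p ` {0..<d})"
        by (simp add: sum.reindex[OF permutes_inj_on[OF p]])
      then show ?thesis by (simp add: permutes_image[OF p])
    qed
    moreover have "(\<Sum>i = 0..<d. cw m ms i + fw m ms (p i) - fw m ms i) \<le> (\<Sum>i = 0..<d. w i (p i))"
      by (rule sum_mono) (use pot permutes_in_image[OF p] in auto)
    ultimately have le: "(\<Sum>j<d. cw m ms j) \<le> (\<Sum>i = 0..<d. w i (p i))"
      by (simp add: sum.distrib sum_subtractf lessThan_atLeast0)
    have "wbound nu (int m) (signof p * (\<Prod>i = 0..<d. ?M $$ (i, p i))) (0 + (\<Sum>i = 0..<d. w i (p i)))"
      by (rule wbound_mult[OF dv _ wbound_signof[OF dv] pr]) simp_all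
    then show "wbound nu (int m) (signof p * (\<Prod>i = 0..<d. ?M $$ (i, p i))) (\<Sum>j<d. cw m ms j)"
      using wbound_mono le by fastforce
  qed (simp_all add: finite_permutations)
qed


definition Cm :: "nat list \<Rightarrow> nat \<Rightarrow> int" where
  "Cm ms m = (\<Sum>n\<leftarrow>ms. int (min n m))"

definition gfun :: "nat list \<Rightarrow> nat \<Rightarrow> real \<Rightarrow> real" where
  "gfun ms m s = (real_of_int (Cm ms m) - real (sum_list ms) + s) / real m"

lemma Cm_big: "\<forall>b\<in>set ns. b \<le> n \<Longrightarrow> (\<Sum>b\<leftarrow>ns. int (min b n)) = int (sum_list ns)"
  by (induction ns) auto

lemma hp_le:
  assumes "sorted_wrt (\<ge>) ms" "\<forall>x\<in>set ms. x > 0" "ms \<noteq> []" "0 \<le> s" "s \<le> real (sum_list ms)"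
  shows "\<exists>m\<in>set ms. young_polygon ms s \<le> gfun ms m s"
  using assms
proof (induction ms arbitrary: s)
  case Nil then show ?case by simp
next
  case (Cons n ns)
  have srt: "\<forall>b\<in>set ns. b \<le> n" "sorted_wrt (\<ge>) ns" using Cons.prems(1) by auto
  have npos: "n > 0" using Cons.prems(2) by auto
  show ?case
  proof (cases "s \<le> real n")
    case True
    have "Cm (n # ns) n = int n + int (sum_list ns)" unfolding Cm_def using Cm_big[OF srt(1)] by simp
    then have "gfun (n # ns) n s = s / real n" unfolding gfun_def by simp
    then show ?thesis using True by auto
  next
    case False
    have ne: "ns \<noteq> []" using False Cons.prems(5) by auto
    obtain m where m: "m \<in> set ns" "young_polygon ns (s - real n) \<le> gfun ns m (s - real n)"
      using Cons.IH[OF srt(2) _ ne, of "s - real n"] Cons.prems False by auto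
    have mn: "m \<le> n" "m > 0" using m(1) srt(1) Cons.prems(2) by auto
    have "Cm (n # ns) m = int m + Cm ns m" unfolding Cm_def using mn by simp
    then have "gfun (n # ns) m s = 1 + gfun ns m (s - real n)"
      unfolding gfun_def using mn by (simp add: field_simps)
    then show ?thesis using m False by (intro bexI[of _ m]) auto
  qed
qed

lemma gfun_affine: "gfun ms m ((1 - t) * x + t * y) = (1 - t) * gfun ms m x + t * gfun ms m y"
  unfolding gfun_def by (cases "m = 0") (simp_all add: field_simps)

theorem mainTheorem2:
  fixes l :: nat and nu :: "'a::field_char_0 \<Rightarrow> int" and d :: nat
    and A :: "'a mat" and ms :: "nat list"
  assumes "unramified_l_adic_field l nu"
    and "A \<in> carrier_mat d d"
    and "integral_mat nu A"
    and "reduction_nilpotent nu A"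
    and "reduction_jordan_type nu A ms"
  shows "\<forall>s \<in> {0..real d}. newton_polygon nu (char_poly A) s \<ge> ereal (young_polygon ms s)"
proof
  fix s assume s: "s \<in> {0..real d}"
  have dv: "discrete_valuation nu" using assms(1) unfolding unramified_l_adic_field_def by blast
  have Ac: "A \<in> carrier_mat d d" by fact
  from assms(5) obtain P Pi where srt: "sorted_wrt (\<ge>) ms" and pos: "\<forall>m \<in> set ms. m > 0"
    and Pc: "P \<in> carrier_mat d d" and Pic: "Pi \<in> carrier_mat d d" and PPi: "P * Pi = 1\<^sub>m d"
    and cong: "mat_cong_l nu (Pi * A * P) (JM ms)"
    unfolding reduction_jordan_type_def using Ac by auto
  let ?B = "Pi * A * P"
  have Bc: "?B \<in> carrier_mat d d" using Pc Pic Ac by auto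
  have dd: "d = sum_list ms" using cong Pc Pic unfolding mat_cong_l_def by (simp add: comp_def)
  have PiP: "Pi * P = 1\<^sub>m d" by (rule mat_mult_left_right_inverse[OF Pc Pic PPi])
  have "P * ?B * Pi = (P * Pi) * A * (P * Pi)"
    using Pc Pic Ac by (simp add: assoc_mult_mat[of _ d d _ d _ d])
  then have AB: "A = P * ?B * Pi" using PPi Ac by simp
  have "similar_mat A ?B" unfolding similar_mat_def similar_mat_wit_def
    using Ac Bc Pc Pic PPi PiP AB by (intro exI[of _ P] exI[of _ Pi]) (auto simp: Let_def)
  then have cpeq: "char_poly A = char_poly ?B" by (rule char_poly_similar)
  have deg: "degree (char_poly A) = d" using degree_monic_char_poly[OF Ac] by simp
  define M where "M = insert 1 (set ms)"
  have Mfin: "finite M" "M \<noteq> {}" unfolding M_def by auto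
  have Mpos: "m > 0" if "m \<in> M" for m using that pos unfolding M_def by auto
  have wb: "wbound nu (int m) (char_poly A) (Cm ms m)" if "m \<in> M" for m
    using charpoly_wbound[OF dv Bc dd Mpos[OF that] cong] cpeq cw_sum[OF Mpos[OF that], of ms] dd
    unfolding Cm_def by simp
  define phi where "phi x = Max ((\<lambda>m. gfun ms m x) ` M)" for x
  have phi_ge: "gfun ms m x \<le> phi x" if "m \<in> M" for m x
    unfolding phi_def using Mfin that by (intro Max_ge) auto
  have conv: "convex_on {0..real (degree (char_poly A))} phi"
  proof (rule convex_onI)
    show "convex {0..real (degree (char_poly A))}" by (rule convex_real_interval)
  next
    fix t x y :: real assume t: "t > 0" "t < 1"
    show "phi ((1 - t) *\<^sub>R x + t *\<^sub>R y) \<le> (1 - t) * phi x + t * phi y"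
      unfolding phi_def[of "(1 - t) *\<^sub>R x + t *\<^sub>R y"] using Mfin
    proof (subst Max_le_iff, simp_all, intro ballI)
      fix m assume m: "m \<in> M"
      have "gfun ms m ((1 - t) * x + t * y) = (1 - t) * gfun ms m x + t * gfun ms m y"
        by (rule gfun_affine)
      also have "\<dots> \<le> (1 - t) * phi x + t * phi y"
        using t phi_ge[OF m] by (intro add_mono mult_left_mono) auto
      finally show "gfun ms m ((1 - t) * x + t * y) \<le> (1 - t) * phi x + t * phi y" .
    qed
  qed
  have coef: "\<forall>i \<le> degree (char_poly A). coeff (char_poly A) (degree (char_poly A) - i) \<noteq> 0 \<longrightarrow>
      phi (real i) \<le> real_of_int (nu (coeff (char_poly A) (degree (char_poly A) - i)))"
  proof (intro allI impI)
    fix i assume i: "i \<le> degree (char_poly A)" and nz: "coeff (char_poly A) (degree (char_poly A) - i) \<noteq> 0"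
    let ?c = "coeff (char_poly A) (d - i)"
    show "phi (real i) \<le> real_of_int (nu (coeff (char_poly A) (degree (char_poly A) - i)))"
      unfolding phi_def deg using Mfin
    proof (subst Max_le_iff, simp_all, intro ballI)
      fix m assume m: "m \<in> M"
      have "Cm ms m \<le> int m * nu ?c + int (d - i)" using wb[OF m] nz deg unfolding wbound_def by auto
      then have h: "Cm ms m - int d + int i \<le> int m * nu ?c" using i deg by (simp add: of_nat_diff)
      then have "real_of_int (Cm ms m - int d + int i) \<le> real_of_int (int m * nu ?c)"
        by (simp only: of_int_le_iff)
      then have "real_of_int (Cm ms m) - real (sum_list ms) + real i \<le> real m * real_of_int (nu ?c)"
        using dd by simp
      then show "gfun ms m (real i) \<le> real_of_int (nu ?c)"
        unfolding gfun_def using Mpos[OF m] by (simp add: pos_divide_le_eq mult.commute)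
    qed
  qed
  have young: "young_polygon ms s \<le> phi s"
  proof (cases "ms = []")
    case True
    then have "s = 0" using s dd by simp
    moreover have "gfun ms 1 0 = 0" using True unfolding gfun_def Cm_def by simp
    ultimately show ?thesis using True phi_ge[of 1 0] unfolding M_def by simp
  next
    case False
    obtain m where "m \<in> set ms" "young_polygon ms s \<le> gfun ms m s"
      using hp_le[OF srt pos False] s dd by auto
    then show ?thesis using phi_ge[of m s] unfolding M_def by fastforce
  qed
  show "newton_polygon nu (char_poly A) s \<ge> ereal (young_polygon ms s)"
    unfolding newton_polygon_def
    by (rule SUP_upper2[of phi]) (use conv coef young in auto)
qed

end
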